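(* Let $\theta\in(0,1)$ and $\delta>0$ with $\theta+\delta<1$, and for $\lambda>0$ set $\varphi_0(x)=e^{\lambda(x-\theta)^2}$. For a sufficiently large fixed constant $\lambda>0$, there exist constants $s_0>0$ and $C>0$ such that $$s\int_{\theta+\delta}^1|f(x)|^2e^{2s\varphi_0(x)}\,dx\le C\int_{\theta+\delta}^1|f'(x)|^2e^{2s\varphi_0(x)}\,dx$$ for all $s\ge s_0$ and all $f\in H^1(\theta+\delta,1)$ with $f(1)=0$. *)

theory Defs
  imports "HOL-Analysis.Analysis"
begin

text \<open>Sobolev space H^1(a,b) on a bounded interval, via the continuous representative:
  f is in H^1(a,b) with weak derivative g iff g is in L^2(a,b) and
  f x = f a + integral of g over [a,x] for all x in [a,b].\<close>
definition H1_with_deriv :: "real \<Rightarrow> real \<Rightarrow> (real \<Rightarrow> complex) \<Rightarrow> (real \<Rightarrow> complex) \<Rightarrow> bool" where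
  "H1_with_deriv a b f g \<longleftrightarrow>
     g integrable_on {a..b} \<and>
     (\<lambda>x. (norm (g x))\<^sup>2) integrable_on {a..b} \<and>
     (\<forall>x\<in>{a..b}. (g has_integral (f x - f a)) {a..x})"

definition phi0 :: "real \<Rightarrow> real \<Rightarrow> real \<Rightarrow> real" where
  "phi0 lam \<theta> x = exp (lam * (x - \<theta>)\<^sup>2)"

end

theory Submission
  imports Defs
begin

lemma quad_bound:
  fixes y G E :: real
  assumes "y \<ge> 0" "G \<ge> 0" "E > 0" "\<forall>\<epsilon>>0. y \<le> (\<epsilon>*G + E/\<epsilon>)/2"
  shows "y^2 \<le> G*E"
proof (cases "y > 0")
  case True
  have h: "y \<le> (E/y*G + E/(E/y))/2" by (rule assms(4)[rule_format]) (use True assms(3) in simp)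
  have "E/(E/y) = y" using True assms(3) by simp
  with h have "y \<le> (E/y*G + y)/2" by simp
  hence "y \<le> E*G/y" by simp
  hence "y*y \<le> E*G" using True by (simp add: field_simps)
  thus ?thesis by (simp add: power2_eq_square mult.commute)
next
  case False
  thus ?thesis using assms by simp
qed

lemma exp_int:
  fixes k x :: real assumes "k > 0" "x \<le> 1"
  shows "((\<lambda>t. exp (-(k*(t-x)))) has_integral ((1 - exp(-(k*(1-x))))/k)) {x..1}"
proof -
  have "((\<lambda>t. exp (-(k*(t-x)))) has_integral ((\<lambda>t. - exp (-(k*(t-x)))/k) 1 - (\<lambda>t. - exp (-(k*(t-x)))/k) x)) {x..1}"
    apply (rule fundamental_theorem_of_calculus[OF assms(2)])
    unfolding has_real_derivative_iff_has_vector_derivative[symmetric]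
    using assms(1) by (auto intro!: derivative_eq_intros)
  thus ?thesis by (simp add: field_simps diff_divide_distrib)
qed

lemma phi_diff:
  fixes lam \<theta> \<delta> x t :: real
  assumes "lam \<ge> 0" "\<theta> + \<delta> \<le> x" "x \<le> t" "0 < \<delta>"
  shows "phi0 lam \<theta> t - phi0 lam \<theta> x \<ge> 2*lam*\<delta>*(t-x)"
proof -
  let ?a = "lam*(x-\<theta>)^2" and ?b = "lam*(t-\<theta>)^2"
  have sq: "(t-\<theta>)^2 - (x-\<theta>)^2 \<ge> 2*\<delta>*(t-x)"
  proof -
    have "(t-\<theta>)^2 - (x-\<theta>)^2 = (t-x)*(t+x-2*\<theta>)" by (simp add: power2_eq_square algebra_simps)
    also have "\<dots> \<ge> (t-x)*(2*\<delta>)" using assms by (intro mult_left_mono) auto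
    finally show ?thesis by (simp add: algebra_simps)
  qed
  have ab: "?b - ?a \<ge> 2*lam*\<delta>*(t-x)"
    using mult_left_mono[OF sq assms(1)] by (simp add: algebra_simps)
  have a0: "?a \<ge> 0" using assms by simp
  have "exp ?b = exp ?a * exp (?b - ?a)" by (simp add: exp_diff)
  also have "\<dots> \<ge> exp ?a * (1 + (?b - ?a))" using exp_ge_add_one_self by (intro mult_left_mono) auto
  finally have X: "exp ?b - exp ?a \<ge> exp ?a * (?b - ?a)" by (simp add: algebra_simps)
  have "2*lam*\<delta>*(t-x) \<ge> 0" using assms by simp
  hence ba: "?b - ?a \<ge> 0" using ab by linarith
  have "exp ?a \<ge> 1" using a0 by simp
  hence Y: "exp ?a * (?b - ?a) \<ge> (?b - ?a)"
    using ba mult_right_mono[of 1 "exp ?a" "?b - ?a"] by simp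
  show ?thesis using ab X Y unfolding phi0_def by linarith
qed


lemma amgm_aux:
  fixes n u \<epsilon> :: real
  assumes "u > 0" "\<epsilon> > 0"
  shows "n \<le> \<epsilon>/2 * (n^2 * u) + 1/(2*\<epsilon>) * (1/u)"
proof -
  have "0 \<le> (\<epsilon>*u*n - 1)^2 / (2*\<epsilon>*u)" using assms by simp
  also have "\<dots> = \<epsilon>/2 * (n^2 * u) + 1/(2*\<epsilon>) * (1/u) - n"
    using assms by (simp add: field_simps power2_eq_square)
  finally show ?thesis by simp
qed

theorem lemma4p12:
  fixes \<theta> \<delta> :: real
  assumes "0 < \<theta>" "\<theta> < 1" "0 < \<delta>" "\<theta> + \<delta> < 1"
  shows "\<exists>lam0>0. \<forall>lam\<ge>lam0. \<exists>s0>0. \<exists>C>0. \<forall>s\<ge>s0. \<forall>f g.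
           H1_with_deriv (\<theta> + \<delta>) 1 f g \<and> f 1 = 0 \<longrightarrow>
           s * integral {\<theta> + \<delta>..1} (\<lambda>x. (norm (f x))\<^sup>2 * exp (2 * s * phi0 lam \<theta> x))
             \<le> C * integral {\<theta> + \<delta>..1} (\<lambda>x. (norm (g x))\<^sup>2 * exp (2 * s * phi0 lam \<theta> x))"
proof (rule exI[of _ "1::real"], intro conjI allI impI)
  fix lam :: real assume lam: "lam \<ge> 1"
  define a where "a = \<theta> + \<delta>"
  have a1: "a < 1" using assms by (simp add: a_def)
  define C where "C = (1 - a) / (4*lam*\<delta>)"
  have Cpos: "C > 0" using a1 lam assms by (simp add: C_def)
  show "\<exists>s0>0. \<exists>C>0. \<forall>s\<ge>s0. \<forall>f g.
           H1_with_deriv (\<theta> + \<delta>) 1 f g \<and> f 1 = 0 \<longrightarrow>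
           s * integral {\<theta> + \<delta>..1} (\<lambda>x. (norm (f x))\<^sup>2 * exp (2 * s * phi0 lam \<theta> x))
             \<le> C * integral {\<theta> + \<delta>..1} (\<lambda>x. (norm (g x))\<^sup>2 * exp (2 * s * phi0 lam \<theta> x))"
  proof (rule exI[of _ "1::real"], intro conjI exI[of _ C] allI impI)
    show "(0::real) < 1" by simp
    show "C > 0" by (rule Cpos)
    fix s :: real and f g :: "real \<Rightarrow> complex"
    assume s: "s \<ge> 1" and H: "H1_with_deriv (\<theta> + \<delta>) 1 f g \<and> f 1 = 0"
    define w where "w = (\<lambda>t. exp (2 * s * phi0 lam \<theta> t))"
    define e where "e = (\<lambda>t. exp (- (2 * s * phi0 lam \<theta> t)))"
    define k where "k = 4 * s * lam * \<delta>"
    have kpos: "k > 0" using s lam assms by (simp add: k_def)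
    have gi: "g integrable_on {a..1}" and g2: "(\<lambda>x. (norm (g x))\<^sup>2) integrable_on {a..1}"
      and hI: "\<forall>x\<in>{a..1}. (g has_integral (f x - f a)) {a..x}" and f1: "f 1 = 0"
      using H unfolding H1_with_deriv_def a_def by auto
    have wcont: "continuous_on S w" for S by (auto simp: w_def phi0_def intro!: continuous_intros)
    have econt: "continuous_on S e" for S by (auto simp: e_def phi0_def intro!: continuous_intros)
    have wpos: "w t > 0" for t by (simp add: w_def)
    have w0: "w t \<ge> 0" for t by (simp add: w_def)
    have ew: "e t = 1 / w t" for t by (simp add: e_def w_def exp_minus field_simps)
    have gw: "(\<lambda>t. (norm (g t))\<^sup>2 * w t) integrable_on {a..1}"
    proof -
      have "(\<lambda>t. w t * (norm (g t))\<^sup>2) absolutely_integrable_on {a..1}"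
      proof (rule absolutely_integrable_bounded_measurable_product_real)
        show "w \<in> borel_measurable (lebesgue_on {a..1})"
          by (rule continuous_imp_measurable_on_sets_lebesgue[OF wcont]) simp
        show "{a..1} \<in> sets lebesgue" by simp
        show "bounded (w ` {a..1})"
          by (rule compact_imp_bounded[OF compact_continuous_image[OF wcont compact_Icc]])
        show "(\<lambda>x. (norm (g x))\<^sup>2) absolutely_integrable_on {a..1}"
          by (rule nonnegative_absolutely_integrable_1[OF g2]) simp
      qed
      thus ?thesis by (simp add: absolutely_integrable_on_def mult.commute)
    qed
    define G where "G = integral {a..1} (\<lambda>t. (norm (g t))\<^sup>2 * w t)"
    have G0: "G \<ge> 0" unfolding G_def
      by (intro integral_nonneg[OF gw]) (simp add: w0)
    have fx: "f x = - integral {x..1} g" if x: "x \<in> {a..1}" for x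
    proof -
      have "integral {a..x} g + integral {x..1} g = integral {a..1} g"
        using x by (intro Henstock_Kurzweil_Integration.integral_combine[OF _ _ gi]) auto
      moreover have "integral {a..x} g = f x - f a" using hI x by (auto intro: integral_unique)
      moreover have "integral {a..1} g = f 1 - f a" using hI a1 by (auto intro: integral_unique)
      ultimately have "f x + integral {x..1} g = 0" using f1 by (simp add: algebra_simps)
      thus ?thesis by (simp add: eq_neg_iff_add_eq_0)
    qed
    have key: "(norm (f x))\<^sup>2 * w x \<le> G / k" if x: "x \<in> {a..1}" for x
    proof -
      have xa: "a \<le> x" "x \<le> 1" using x by auto
      have sub: "{x..1} \<subseteq> {a..1}" using xa by auto
      have gi': "g integrable_on {x..1}" using integrable_subinterval_real[OF gi sub] .
      have gw': "(\<lambda>t. (norm (g t))\<^sup>2 * w t) integrable_on {x..1}"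
        using integrable_subinterval_real[OF gw sub] .
      have ie: "e integrable_on {x..1}" by (rule integrable_continuous_interval[OF econt])
      have A: "integral {x..1} (\<lambda>t. (norm (g t))\<^sup>2 * w t) \<le> G"
        unfolding G_def using sub gw' gw
        by (intro integral_subset_le) (auto simp: w0)
      define E where "E = exp (- (2 * s * phi0 lam \<theta> x)) / k"
      have Epos: "E > 0" using kpos by (simp add: E_def)
      have B: "integral {x..1} e \<le> E"
      proof -
        have hi: "((\<lambda>t. exp (- (2 * s * phi0 lam \<theta> x)) * exp (-(k*(t-x)))) has_integral
             exp (- (2 * s * phi0 lam \<theta> x)) * ((1 - exp(-(k*(1-x))))/k)) {x..1}"
          by (rule has_integral_mult_right[OF exp_int[OF kpos xa(2)]])
        have "integral {x..1} e \<le> exp (- (2 * s * phi0 lam \<theta> x)) * ((1 - exp(-(k*(1-x))))/k)"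
        proof (rule has_integral_le[OF integrable_integral[OF ie] hi])
          fix t assume t: "t \<in> {x..1}"
          have pd: "phi0 lam \<theta> t - phi0 lam \<theta> x \<ge> 2*lam*\<delta>*(t-x)"
            using t xa lam assms by (intro phi_diff) (auto simp: a_def)
          have "2 * s * (phi0 lam \<theta> t - phi0 lam \<theta> x) \<ge> 2 * s * (2*lam*\<delta>*(t-x))"
            using pd s by (intro mult_left_mono) auto
          hence "- (2 * s * phi0 lam \<theta> t) \<le> - (2 * s * phi0 lam \<theta> x) + -(k*(t-x))"
            by (simp add: k_def algebra_simps)
          thus "e t \<le> exp (- (2 * s * phi0 lam \<theta> x)) * exp (-(k*(t-x)))"
            unfolding e_def exp_add[symmetric] by simp
        qed
        also have "\<dots> \<le> exp (- (2 * s * phi0 lam \<theta> x)) * (1/k)"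
          using kpos by (intro mult_left_mono divide_right_mono) auto
        finally show ?thesis by (simp add: E_def)
      qed
      have bnd: "\<forall>\<epsilon>>0. norm (f x) \<le> (\<epsilon>*G + E/\<epsilon>)/2"
      proof (intro allI impI)
        fix \<epsilon> :: real assume ep: "\<epsilon> > 0"
        let ?h = "\<lambda>t. \<epsilon>/2 * ((norm (g t))\<^sup>2 * w t) + 1/(2*\<epsilon>) * e t"
        have hint: "?h integrable_on {x..1}"
          using integrable_add[OF integrable_on_cmult_left[OF gw', of "\<epsilon>/2"] integrable_on_cmult_left[OF ie, of "1/(2*\<epsilon>)"]] by simp
        have "norm (f x) = norm (integral {x..1} g)" using fx[OF x] by simp
        also have "\<dots> \<le> integral {x..1} ?h"
        proof (rule integral_norm_bound_integral[OF gi' hint])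
          fix t assume "t \<in> {x..1}"
          show "norm (g t) \<le> ?h t" using amgm_aux[OF wpos ep, of "norm (g t)" t] ew by simp
        qed
        also have "\<dots> = \<epsilon>/2 * integral {x..1} (\<lambda>t. (norm (g t))\<^sup>2 * w t) + 1/(2*\<epsilon>) * integral {x..1} e"
        proof -
          have i1: "(\<lambda>t. \<epsilon>/2 * ((norm (g t))\<^sup>2 * w t)) integrable_on {x..1}"
            using integrable_on_cmult_left[OF gw', of "\<epsilon>/2"] by simp
          have i2: "(\<lambda>t. 1/(2*\<epsilon>) * e t) integrable_on {x..1}"
            using integrable_on_cmult_left[OF ie, of "1/(2*\<epsilon>)"] by simp
          show ?thesis by (simp only: integral_add[OF i1 i2] integral_mult_right)
        qed
        also have "\<dots> \<le> \<epsilon>/2 * G + 1/(2*\<epsilon>) * E"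
          using A B ep by (intro add_mono mult_left_mono) auto
        finally show "norm (f x) \<le> (\<epsilon>*G + E/\<epsilon>)/2" by (simp add: field_simps)
      qed
      have "(norm (f x))\<^sup>2 \<le> G * E" by (rule quad_bound[OF norm_ge_zero G0 Epos bnd])
      hence "(norm (f x))\<^sup>2 * w x \<le> G * E * w x" using wpos by (intro mult_right_mono) (auto intro: less_imp_le)
      also have "G * E * w x = G / k" by (simp add: E_def w_def exp_minus field_simps)
      finally show ?thesis .
    qed
    have fcont: "continuous_on {a..1} f"
    proof -
      have "continuous_on {a..1} (\<lambda>x. f a + integral {a..x} g)"
        by (intro continuous_intros indefinite_integral_continuous_1[OF gi])
      moreover have "f a + integral {a..x} g = f x" if "x \<in> {a..1}" for x
      proof -
        have "integral {a..x} g = f x - f a" using hI that by (auto intro: integral_unique)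
        thus ?thesis by simp
      qed
      ultimately show ?thesis by (rule continuous_on_eq)
    qed
    have lint: "(\<lambda>x. (norm (f x))\<^sup>2 * w x) integrable_on {a..1}"
      by (intro integrable_continuous_interval continuous_intros fcont wcont)
    have "integral {a..1} (\<lambda>x. (norm (f x))\<^sup>2 * w x) \<le> integral {a..1} (\<lambda>x. G / k)"
      using key by (intro integral_le[OF lint]) auto
    also have "\<dots> = (1 - a) * (G / k)" using a1 by simp
    finally have L: "integral {a..1} (\<lambda>x. (norm (f x))\<^sup>2 * w x) \<le> (1 - a) * (G / k)" .
    have "s * integral {a..1} (\<lambda>x. (norm (f x))\<^sup>2 * w x) \<le> s * ((1 - a) * (G / k))"
      using L s by (intro mult_left_mono) auto
    also have "s * ((1 - a) * (G / k)) = C * G"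
      using s lam assms by (simp add: C_def k_def field_simps)
    finally show "s * integral {\<theta> + \<delta>..1} (\<lambda>x. (norm (f x))\<^sup>2 * exp (2 * s * phi0 lam \<theta> x))
             \<le> C * integral {\<theta> + \<delta>..1} (\<lambda>x. (norm (g x))\<^sup>2 * exp (2 * s * phi0 lam \<theta> x))"
      by (simp add: G_def w_def a_def)
  qed
qed (simp)

end
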